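(* Let $G$ be a finite transitive permutation group on a set $\Omega$ and suppose that $x\in G$ is quasi-semiregular on $\Omega$. If $\Sigma$ is a system of imprimitivity preserved by $G$, then the permutation $x^\Sigma$ induced by $x$ on $\Sigma$ is quasi-semiregular. Equivalently, if $x\in G_\alpha$ is quasi-semiregular on $[G:G_\alpha]$, then for every subgroup $K$ with $G_\alpha\le K\le G$, $x$ is quasi-semiregular on $[G:K]$.
   Context: A permutation $g$ is quasi-semiregular if $\langle g\rangle$ has a unique fixed point and acts semiregularly (only the identity fixes a point) on the remaining points. $[G:K]$ denotes the set of right cosets of $K$ with $G$ acting by right multiplication. *)

theory Defs
  imports "HOL-Algebra.Bij" "HOL-Library.Disjoint_Sets"
begin

text \<open>A permutation f of the set X is quasi-semiregular if the cyclic group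
  generated by f has a unique fixed point w in X, and every nontrivial element
  of that cyclic group fixes no point of X other than w (equivalently: any power
  of f fixing a point y different from w is the identity on X).
  For a permutation of a finite set, the cyclic group generated by f consists of
  the nonnegative powers f^^k, and a point fixed by the whole group is exactly
  a point fixed by f.\<close>

definition quasi_semiregular :: "'a set \<Rightarrow> ('a \<Rightarrow> 'a) \<Rightarrow> bool" where
  "quasi_semiregular X f \<longleftrightarrow>
     bij_betw f X X \<and>
     (\<exists>!w. w \<in> X \<and> f w = w) \<and>
     (\<forall>w\<in>X. f w = w \<longrightarrow>
        (\<forall>y\<in>X - {w}. \<forall>k::nat. (f ^^ k) y = y \<longrightarrow> (\<forall>z\<in>X. (f ^^ k) z = z)))"

definition block_system :: "'a set \<Rightarrow> ('a \<Rightarrow> 'a) set \<Rightarrow> 'a set set \<Rightarrow> bool" where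
  "block_system \<Omega> G \<Sigma> \<longleftrightarrow> partition_on \<Omega> \<Sigma> \<and> (\<forall>g\<in>G. \<forall>B\<in>\<Sigma>. g ` B \<in> \<Sigma>)"

end

theory Submission
  imports Defs
begin

lemma funpow_mult_fix:
  assumes "(f^^m) y = y" shows "(f^^(q*m)) y = y"
proof (induction q)
  case 0 then show ?case by simp
next
  case (Suc q)
  have "(f^^(Suc q * m)) y = (f^^m) ((f^^(q*m)) y)"
    by (simp add: funpow_add)
  then show ?case using Suc assms by simp
qed

lemma funpow_mod:
  assumes "(f^^m) y = y" shows "(f^^n) y = (f^^(n mod m)) y"
proof -
  have "n = n mod m + (n div m) * m" by simp
  then have "(f^^n) y = (f^^(n mod m)) ((f^^((n div m) * m)) y)"
    by (metis comp_apply funpow_add)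
  then show ?thesis using funpow_mult_fix[OF assms] by simp
qed

lemma orbit_count:
  assumes "finite S" "0 < m" "f ` S \<subseteq> S" "\<forall>z\<in>S. \<forall>j. (f^^j) z = z \<longleftrightarrow> m dvd j"
  shows "m dvd card S"
  using assms
proof (induction "card S" arbitrary: S rule: less_induct)
  case less
  show ?case
  proof (cases "S = {}")
    case True then show ?thesis by simp
  next
    case False
    then obtain y where y: "y \<in> S" by blast
    have ym: "(f^^m) y = y" using less.prems(4) y by auto
    define Orb where "Orb = (\<lambda>i. (f^^i) y) ` {..<m}"
    have allO: "(f^^n) y \<in> Orb" for n
      using funpow_mod[OF ym, of n] less.prems(2) unfolding Orb_def by auto
    have inS: "(f^^n) y \<in> S" for n
    proof (induction n)
      case 0 then show ?case using y by simp
    next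
      case (Suc n) then show ?case using less.prems(3) by auto
    qed
    have OS: "Orb \<subseteq> S" unfolding Orb_def using inS by auto
    have injO: "inj_on (\<lambda>i. (f^^i) y) {..<m}"
    proof (rule inj_onI)
      fix i j assume i: "i \<in> {..<m}" and j: "j \<in> {..<m}" and e: "(f^^i) y = (f^^j) y"
      show "i = j"
      proof (rule ccontr)
        assume "i \<noteq> j"
        then consider "i < j" | "j < i" by linarith
        then show False
        proof cases
          case 1
          have "(f^^((j-i)+i)) y = (f^^(j-i)) ((f^^i) y)"
            by (simp only: funpow_add comp_apply)
          then have "(f^^j) y = (f^^(j-i)) ((f^^i) y)"
            using 1 by simp
          then have "(f^^(j-i)) ((f^^i) y) = (f^^i) y" using e by simp
          then have "m dvd (j-i)" using less.prems(4)[rule_format, OF inS[of i]] by simp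
          then show False using 1 j by (simp add: nat_dvd_not_less)
        next
          case 2
          have "(f^^((i-j)+j)) y = (f^^(i-j)) ((f^^j) y)"
            by (simp only: funpow_add comp_apply)
          then have "(f^^i) y = (f^^(i-j)) ((f^^j) y)"
            using 2 by simp
          then have "(f^^(i-j)) ((f^^j) y) = (f^^j) y" using e by simp
          then have "m dvd (i-j)" using less.prems(4)[rule_format, OF inS[of j]] by simp
          then show False using 2 i by (simp add: nat_dvd_not_less)
        qed
      qed
    qed
    have cardO: "card Orb = m" unfolding Orb_def using card_image[OF injO] by simp
    have fS': "f ` (S - Orb) \<subseteq> S - Orb"
    proof
      fix u assume "u \<in> f ` (S - Orb)"
      then obtain z where z: "z \<in> S" "z \<notin> Orb" "u = f z" by auto
      have "u \<in> S" using z less.prems(3) by auto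
      moreover have "u \<notin> Orb"
      proof
        assume "u \<in> Orb"
        then obtain i where i: "u = (f^^i) y" unfolding Orb_def by auto
        have zm: "(f^^m) z = z" using less.prems(4) z by auto
        have "(f^^(Suc (m - 1))) z = (f^^(m - 1)) (f z)"
          by (simp only: funpow_Suc_right comp_apply)
        then have "(f^^m) z = (f^^(m - 1)) (f z)"
          using less.prems(2) by simp
        also have "\<dots> = (f^^(m-1)) ((f^^i) y)" using z i by simp
        also have "\<dots> = (f^^(m - 1 + i)) y" by (simp add: funpow_add)
        finally have "z = (f^^(m - 1 + i)) y" using zm by simp
        then show False using allO[of "m - 1 + i"] z(2) by simp
      qed
      ultimately show "u \<in> S - Orb" by simp
    qed
    have cle: "card Orb \<le> card S" using OS less.prems(1) by (rule card_mono[rotated])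
    have cdiff: "card (S - Orb) = card S - card Orb"
      using OS less.prems(1) by (simp add: card_Diff_subset finite_subset)
    have "card (S - Orb) < card S"
      using cle cdiff cardO less.prems(2) by simp
    then have "m dvd card (S - Orb)"
    proof (rule less.hyps)
      show "finite (S - Orb)" using less.prems(1) by simp
      show "0 < m" by (rule less.prems(2))
      show "f ` (S - Orb) \<subseteq> S - Orb" by (rule fS')
      show "\<forall>z\<in>S - Orb. \<forall>j. (f^^j) z = z \<longleftrightarrow> m dvd j" using less.prems(4) by blast
    qed
    moreover have "card S = card Orb + card (S - Orb)"
      using cle cdiff by simp
    ultimately show ?thesis using cardO by simp
  qed
qed

lemma funpow_in:
  assumes "bij_betw f X X" "z \<in> X" shows "(f^^n) z \<in> X"
  by (rule bij_betw_apply[OF bij_betw_funpow[OF assms(1)] assms(2)])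

lemma core:
  assumes fin: "finite \<Omega>" and bij: "bij_betw f \<Omega> \<Omega>" and w: "w \<in> \<Omega>" "f w = w"
    and P: "\<forall>y\<in>\<Omega>-{w}. \<forall>j. (f^^j) y = y \<longrightarrow> (\<forall>z\<in>\<Omega>. (f^^j) z = z)"
    and C: "C \<subseteq> \<Omega>" "f ` C = C" "w \<notin> C" "C \<noteq> {}"
    and D: "D \<subseteq> \<Omega>" "f ` D = D" "w \<in> D" "card D = card C"
  shows "\<forall>z\<in>\<Omega>. f z = z"
proof -
  obtain y0 where y0: "y0 \<in> C" using C(4) by auto
  have y0O: "y0 \<in> \<Omega>" "y0 \<noteq> w" using y0 C(1,3) by auto
  have ninj: "\<not> inj (\<lambda>n. (f^^n) y0)"
  proof
    assume "inj (\<lambda>n. (f^^n) y0)"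
    moreover have "finite (range (\<lambda>n. (f^^n) y0))"
      using funpow_in[OF bij y0O(1)] fin by (meson finite_subset image_subsetI)
    ultimately have "finite (UNIV :: nat set)" using finite_imageD by blast
    then show False by simp
  qed
  then obtain i j where ij: "i < j" "(f^^i) y0 = (f^^j) y0"
    unfolding inj_def by (metis linorder_neqE_nat)
  have "(f^^(i + (j-i))) y0 = (f^^i) ((f^^(j-i)) y0)" by (simp only: funpow_add comp_apply)
  then have "(f^^i) ((f^^(j-i)) y0) = (f^^i) y0" using ij by simp
  moreover have "inj_on (f^^i) \<Omega>" using bij_betw_funpow[OF bij] bij_betw_def by blast
  ultimately have ret: "(f^^(j-i)) y0 = y0"
    using funpow_in[OF bij y0O(1)] y0O(1) by (meson inj_onD)
  define m where "m = (LEAST k. 0 < k \<and> (f^^k) y0 = y0)"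
  have ex: "0 < j - i \<and> (f^^(j-i)) y0 = y0" using ij ret by simp
  have m: "0 < m" "(f^^m) y0 = y0" using LeastI[of "\<lambda>k. 0 < k \<and> (f^^k) y0 = y0", OF ex] m_def by auto
  have mmin: "\<And>k. 0 < k \<Longrightarrow> k < m \<Longrightarrow> (f^^k) y0 \<noteq> y0"
    using not_less_Least m_def by blast
  have midO: "\<forall>z\<in>\<Omega>. (f^^m) z = z" using P m(2) y0O by blast
  have dvd: "\<forall>z\<in>\<Omega>-{w}. \<forall>j. (f^^j) z = z \<longleftrightarrow> m dvd j"
  proof (intro ballI allI iffI)
    fix z j assume z: "z \<in> \<Omega>-{w}" and e: "(f^^j) z = z"
    then have "(f^^j) y0 = y0" using P y0O by blast
    then have "(f^^(j mod m)) y0 = y0" using funpow_mod[OF m(2), of j] by simp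
    then have "j mod m = 0" using mmin[of "j mod m"] m(1) by (meson mod_less_divisor neq0_conv)
    then show "m dvd j" by auto
  next
    fix z j assume z: "z \<in> \<Omega>-{w}" and "m dvd j"
    then obtain q where "j = q * m" by (metis dvd_def mult.commute)
    then show "(f^^j) z = z" using funpow_mult_fix[of m f z q] midO z by simp
  qed
  have fC: "m dvd card C"
    proof (rule orbit_count)
    show "finite C" using C(1) fin finite_subset by blast
    show "0 < m" by (rule m(1))
    show "f ` C \<subseteq> C" using C(2) by (rule equalityD1)
    show "\<forall>z\<in>C. \<forall>j. (f^^j) z = z \<longleftrightarrow> m dvd j" using dvd C(1,3) by blast
  qed
  have injf: "inj_on f \<Omega>" using bij bij_betw_def by blast
  have fD: "f ` (D - {w}) \<subseteq> D - {w}"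
  proof
    fix u assume "u \<in> f ` (D - {w})"
    then obtain z where z: "z \<in> D" "z \<noteq> w" "u = f z" by auto
    have "u \<in> D" using z D(2) by blast
    moreover have "u \<noteq> w"
    proof
      assume "u = w"
      then have "f z = f w" using z w by simp
      then show False using inj_onD[OF injf, of z w] z D(1) w(1) by blast
    qed
    ultimately show "u \<in> D - {w}" by simp
  qed
  have mD: "m dvd card (D - {w})"
    proof (rule orbit_count)
    show "finite (D - {w})" using D(1) fin finite_subset by blast
    show "0 < m" by (rule m(1))
    show "f ` (D - {w}) \<subseteq> D - {w}" by (rule fD)
    show "\<forall>z\<in>D - {w}. \<forall>j. (f^^j) z = z \<longleftrightarrow> m dvd j" using dvd D(1) by blast
  qed
  have "finite C" using C(1) fin finite_subset by blast
  then have "card C > 0" using C(4) by (simp add: card_gt_0_iff)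
  have "card (D - {w}) = card C - 1" using D(3,4) by (simp add: card_Diff_singleton)
  then have "m dvd (card C - (card C - 1))" using fC mD by (simp add: dvd_diff_nat)
  moreover have "card C - (card C - 1) = 1" using \<open>card C > 0\<close> by simp
  ultimately have "m dvd 1" by simp
  then have "m = 1" by simp
  then have "f y0 = y0" using m(2) by simp
  then have "(f^^1) y0 = y0" by simp
  then have "\<forall>z\<in>\<Omega>. (f^^1) z = z" using P y0O by blast
  then show ?thesis by simp
qed


lemma image_funpow:
  fixes f :: "'a \<Rightarrow> 'a" and Y :: "'a set"
  shows "((\<lambda>B. f ` B)^^k) Y = (f^^k) ` Y"
proof (induction k)
  case 0 then show ?case by (simp add: id_def)
next
  case (Suc k) then show ?case by (simp add: image_comp)
qed

lemma funpow_fix: "f w = w \<Longrightarrow> (f^^k) w = w"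
  by (induction k) auto

lemma image_id_on: "\<forall>z\<in>Z. h z = z \<Longrightarrow> h ` Z = Z"
proof -
  assume a: "\<forall>z\<in>Z. h z = z"
  have "h ` Z = (\<lambda>z. z) ` Z" by (rule image_cong[OF refl]) (use a in blast)
  then show ?thesis by simp
qed

theorem lemma2p1:
  fixes \<Omega> :: "'a set" and G :: "('a \<Rightarrow> 'a) set" and x :: "'a \<Rightarrow> 'a"
    and \<Sigma> :: "'a set set"
  assumes "subgroup G (BijGroup \<Omega>)"
    and "finite G"
    and "\<forall>a\<in>\<Omega>. \<forall>b\<in>\<Omega>. \<exists>g\<in>G. g a = b"
    and "x \<in> G"
    and "quasi_semiregular \<Omega> x"
    and "block_system \<Omega> G \<Sigma>"
  shows "quasi_semiregular \<Sigma> (\<lambda>B. x ` B)"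
proof -
  have Gbij: "\<And>g. g \<in> G \<Longrightarrow> bij_betw g \<Omega> \<Omega>"
    using subgroup.subset[OF assms(1)] by (auto simp: BijGroup_def Bij_def)
  have xb: "bij_betw x \<Omega> \<Omega>" and uw: "\<exists>!w. w \<in> \<Omega> \<and> x w = w"
    and sr: "\<forall>w\<in>\<Omega>. x w = w \<longrightarrow>
        (\<forall>y\<in>\<Omega> - {w}. \<forall>k::nat. (x ^^ k) y = y \<longrightarrow> (\<forall>z\<in>\<Omega>. (x ^^ k) z = z))"
    using assms(5) unfolding quasi_semiregular_def by blast+
  obtain w where w: "w \<in> \<Omega>" "x w = w" using uw by blast
  have wuniq: "\<And>v. v \<in> \<Omega> \<Longrightarrow> x v = v \<Longrightarrow> v = w" using uw w by blast
  have srw: "\<forall>y\<in>\<Omega> - {w}. \<forall>k::nat. (x ^^ k) y = y \<longrightarrow> (\<forall>z\<in>\<Omega>. (x ^^ k) z = z)"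
    using sr w by blast
  have "\<Omega> \<subseteq> (\<lambda>g. g w) ` G"
  proof
    fix b assume "b \<in> \<Omega>"
    then obtain g where "g \<in> G" "g w = b" using assms(3) w(1) by blast
    then show "b \<in> (\<lambda>g. g w) ` G" by blast
  qed
  then have fin: "finite \<Omega>" using assms(2) finite_subset by blast
  have part: "partition_on \<Omega> \<Sigma>" and pres: "\<forall>g\<in>G. \<forall>B\<in>\<Sigma>. g ` B \<in> \<Sigma>"
    using assms(6) unfolding block_system_def by blast+
  have Un: "\<Omega> = \<Union>\<Sigma>" using partition_onD1[OF part] .
  have disj: "disjoint \<Sigma>" using partition_onD2[OF part] .
  have ne: "{} \<notin> \<Sigma>" using partition_onD3[OF part] .
  have sub: "\<And>B. B \<in> \<Sigma> \<Longrightarrow> B \<subseteq> \<Omega>" using Un by blast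
  have same: "\<And>A B z. A \<in> \<Sigma> \<Longrightarrow> B \<in> \<Sigma> \<Longrightarrow> z \<in> A \<Longrightarrow> z \<in> B \<Longrightarrow> A = B"
  proof (rule ccontr)
    fix A B z assume "A \<in> \<Sigma>" "B \<in> \<Sigma>" "z \<in> A" "z \<in> B" "A \<noteq> B"
    then have "disjnt A B" using pairwiseD[OF disj] by blast
    then show False using \<open>z \<in> A\<close> \<open>z \<in> B\<close> by (simp add: disjnt_iff)
  qed
  obtain Bw where Bw: "Bw \<in> \<Sigma>" "w \<in> Bw" using Un w(1) by blast
  have xS: "\<And>B. B \<in> \<Sigma> \<Longrightarrow> x ` B \<in> \<Sigma>" using pres assms(4) by blast
  have "w \<in> x ` Bw" using Bw(2) w(2) by (metis imageI)
  then have xBw: "x ` Bw = Bw" using same[OF xS[OF Bw(1)] Bw(1)] Bw(2) by blast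
  have finS: "finite \<Sigma>"
  proof -
    have "\<Sigma> \<subseteq> Pow \<Omega>" using sub by blast
    then show ?thesis using fin by (meson finite_Pow_iff finite_subset)
  qed
  have cards: "\<And>C. C \<in> \<Sigma> \<Longrightarrow> card C = card Bw"
  proof -
    fix C assume C: "C \<in> \<Sigma>"
    then obtain c where c: "c \<in> C" using ne by (metis ex_in_conv)
    then have "c \<in> \<Omega>" using sub[OF C] by blast
    then obtain g where g: "g \<in> G" "g w = c" using assms(3) w(1) by blast
    have gB: "g ` Bw \<in> \<Sigma>" using pres g(1) Bw(1) by blast
    have "c \<in> g ` Bw" using g(2) Bw(2) by (metis imageI)
    then have "g ` Bw = C" using same[OF gB C] c by blast
    moreover have "inj_on g Bw"
      using Gbij[OF g(1)] sub[OF Bw(1)] by (meson bij_betw_def inj_on_subset)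
    ultimately show "card C = card Bw" using card_image by metis
  qed
  have injx: "inj_on x \<Omega>" using xb bij_betw_def by blast
  have fixblock: "\<forall>z\<in>\<Omega>. (x^^k) z = z"
    if C: "C \<in> \<Sigma>" "(x^^k) ` C = C" "w \<notin> C" for C k
  proof (rule core)
    show "finite \<Omega>" by (rule fin)
    show "bij_betw (x^^k) \<Omega> \<Omega>" by (rule bij_betw_funpow[OF xb])
    show "w \<in> \<Omega>" by (rule w(1))
    show "(x^^k) w = w" by (rule funpow_fix[where f=x, OF w(2)])
    show "\<forall>y\<in>\<Omega>-{w}. \<forall>j. ((x^^k)^^j) y = y \<longrightarrow> (\<forall>z\<in>\<Omega>. ((x^^k)^^j) z = z)"
      unfolding funpow_mult using srw by blast
    show "C \<subseteq> \<Omega>" by (rule sub[OF C(1)])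
    show "(x^^k) ` C = C" by (rule C(2))
    show "w \<notin> C" by (rule C(3))
    show "C \<noteq> {}" using ne C(1) by blast
    show "Bw \<subseteq> \<Omega>" by (rule sub[OF Bw(1)])
    have "((\<lambda>B. x ` B)^^k) Bw = Bw" using xBw by (rule funpow_fix)
    then show "(x^^k) ` Bw = Bw" by (simp only: image_funpow)
    show "w \<in> Bw" by (rule Bw(2))
    show "card Bw = card C" using cards[OF C(1)] by simp
  qed
  have uniqB: "\<And>C. C \<in> \<Sigma> \<Longrightarrow> x ` C = C \<Longrightarrow> C = Bw"
  proof -
    fix C assume C: "C \<in> \<Sigma>" "x ` C = C"
    have "w \<in> C"
    proof (rule ccontr)
      assume nw: "w \<notin> C"
      have "(x^^1) ` C = C" using C(2) by simp
      then have "\<forall>z\<in>\<Omega>. (x^^1) z = z" using fixblock[OF C(1) _ nw] by blast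
      moreover obtain y where y: "y \<in> C" using ne C(1) by (metis ex_in_conv)
      ultimately have "x y = y" using sub[OF C(1)] by auto
      then have "y = w" using wuniq sub[OF C(1)] y by blast
      then show False using nw y by blast
    qed
    then show "C = Bw" using same[OF C(1) Bw(1)] Bw(2) by blast
  qed
  have A: "bij_betw (\<lambda>B. x ` B) \<Sigma> \<Sigma>"
  proof -
    have inj: "inj_on (\<lambda>B. x ` B) \<Sigma>"
    proof (rule inj_onI)
      fix A B assume "A \<in> \<Sigma>" "B \<in> \<Sigma>" "x ` A = x ` B"
      then show "A = B" using inj_on_image_eq_iff[OF injx sub sub] by blast
    qed
    have "(\<lambda>B. x ` B) ` \<Sigma> \<subseteq> \<Sigma>" using xS by blast
    then have "(\<lambda>B. x ` B) ` \<Sigma> = \<Sigma>" using endo_inj_surj[OF finS _ inj] by blast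
    then show ?thesis using inj bij_betw_def by blast
  qed
  have B: "\<exists>!B. B \<in> \<Sigma> \<and> x ` B = B" using Bw(1) xBw uniqB by blast
  have Cc: "\<forall>W\<in>\<Sigma>. x ` W = W \<longrightarrow> (\<forall>Y\<in>\<Sigma> - {W}. \<forall>k::nat.
      ((\<lambda>B. x ` B) ^^ k) Y = Y \<longrightarrow> (\<forall>Z\<in>\<Sigma>. ((\<lambda>B. x ` B) ^^ k) Z = Z))"
  proof (intro ballI impI allI)
    fix W Y k Z
    assume W: "W \<in> \<Sigma>" "x ` W = W" and Y: "Y \<in> \<Sigma> - {W}"
      and k: "((\<lambda>B. x ` B) ^^ k) Y = Y" and Z: "Z \<in> \<Sigma>"
    have "W = Bw" using uniqB W by blast
    then have "w \<notin> Y" using Y same[OF _ Bw(1)] Bw(2) by blast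
    moreover have "(x^^k) ` Y = Y" using k by (simp only: image_funpow)
    ultimately have "\<forall>z\<in>\<Omega>. (x^^k) z = z" using fixblock Y by blast
    then have "(x^^k) ` Z = Z" using sub[OF Z] by (intro image_id_on) blast
    then show "((\<lambda>B. x ` B) ^^ k) Z = Z" by (simp only: image_funpow)
  qed
  show ?thesis unfolding quasi_semiregular_def using A B Cc by blast
qed

end
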